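(* For all integers $n\ge 3$ and all integers $d$, $$b_n^d=v_{n-1}^{d-2},\qquad w_n^d=v_{n-1}^d+w_{n-1}^{d-1}+v_{n-2}^{d-2},\qquad v_n^d=v_{n-1}^d+w_{n-1}^{d-1}+v_{n-1}^{d-2}+v_{n-2}^{d-2}.$$
   Context: The $2\times n$ Miura-ori $M_{2,n}$ ($n\ge1$) has faces $\alpha_{i,j}$ ($i\in\{1,2\}$, $j\in\{1,\dots,n\}$), interior vertices $x_1,\dots,x_{n-1}$, and creases $e_0$ and $e_{3k-1},e_{3k},e_{3k+1}$ ($k=1,\dots,n-1$). At $x_k$ the creases are left $e_{3k-3}$, top $e_{3k-1}$, right $e_{3k}$, bottom $e_{3k+1}$. Face $\alpha_{1,j}$ is bordered by those of $e_{3j-4}$ (iff $j\ge2$), $e_{3j-3}$, $e_{3j-1}$ (iff $j\le n-1$); $\alpha_{2,j}$ by those of $e_{3j-2}$ (iff $j\ge2$), $e_{3j-3}$, $e_{3j+1}$ (iff $j\le n-1$). An MV assignment $\mu$ maps creases to $\{1,-1\}$; it is locally valid if for each $k$ exactly one of $\mu(e_{3k-1}),\mu(e_{3k}),\mu(e_{3k+1})$ differs from $\mu(e_{3k-3})$. The face flip $\mu_\alpha$ negates $\mu$ on the creases bordering $\alpha$; $\alpha$ is flippable under $\mu$ if $\mu,\mu_\alpha$ are both locally valid; $f(\mu)$ is the number of flippable faces. For $n\ge 2$, the restriction of a locally valid $\mu'$ on $M_{2,n}$ to the creases of $M_{2,n-1}$ (all but $e_{3n-4},e_{3n-3},e_{3n-2}$)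 is a locally valid $\mu$ on $M_{2,n-1}$; $\mu'$ is blue if $f(\mu')-f(\mu)=2$ and non-blue otherwise. Both locally valid assignments of $M_{2,1}$ are blue. Let $v_n^d$ be the number of locally valid MV assignments of $M_{2,n}$ with exactly $d$ flippable faces, $b_n^d$ the number of these that are blue, and $w_n^d=v_n^d-b_n^d$ the number that are non-blue (all these are $0$ when no such assignment exists). *)

theory Defs
  imports Main
begin

text \<open>The 2 x n Miura-ori M_{2,n}. Crease e_i is represented by the natural number i.
  Creases: e_0 and e_{3k-1}, e_{3k}, e_{3k+1} for k = 1..n-1.\<close>

definition creases :: "nat \<Rightarrow> nat set" where
  "creases n = {0} \<union> (\<Union>k\<in>{1..n-1}. {3*k-1, 3*k, 3*k+1})"

definition faces :: "nat \<Rightarrow> (nat \<times> nat) set" where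
  "faces n = {1,2} \<times> {1..n}"

definition border :: "nat \<Rightarrow> nat \<times> nat \<Rightarrow> nat set" where
  "border n a = (let i = fst a; j = snd a in
     if i = 1 then (if j \<ge> 2 then {3*j-4} else {}) \<union> {3*j-3} \<union> (if j \<le> n-1 then {3*j-1} else {})
     else (if j \<ge> 2 then {3*j-2} else {}) \<union> {3*j-3} \<union> (if j \<le> n-1 then {3*j+1} else {}))"

text \<open>MV assignments: maps from the creases of M_{2,n} to {1,-1}; represented as
  functions nat => int which are 0 outside the crease set (extensional).\<close>
definition mv_assignments :: "nat \<Rightarrow> (nat \<Rightarrow> int) set" where
  "mv_assignments n = {\<mu>. (\<forall>e\<in>creases n. \<mu> e \<in> {1,-1}) \<and> (\<forall>e. e \<notin> creases n \<longrightarrow> \<mu> e = 0)}"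

text \<open>Local validity at vertex x_k: exactly one of top/right/bottom differs from left.\<close>
definition locally_valid :: "nat \<Rightarrow> (nat \<Rightarrow> int) \<Rightarrow> bool" where
  "locally_valid n \<mu> \<longleftrightarrow> \<mu> \<in> mv_assignments n \<and>
     (\<forall>k\<in>{1..n-1}. card {e\<in>{3*k-1, 3*k, 3*k+1}. \<mu> e \<noteq> \<mu> (3*k-3)} = 1)"

definition face_flip :: "nat \<Rightarrow> nat \<times> nat \<Rightarrow> (nat \<Rightarrow> int) \<Rightarrow> (nat \<Rightarrow> int)" where
  "face_flip n a \<mu> = (\<lambda>e. if e \<in> border n a then - \<mu> e else \<mu> e)"

definition flippable :: "nat \<Rightarrow> (nat \<Rightarrow> int) \<Rightarrow> nat \<times> nat \<Rightarrow> bool" where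
  "flippable n \<mu> a \<longleftrightarrow> locally_valid n \<mu> \<and> locally_valid n (face_flip n a \<mu>)"

definition nflip :: "nat \<Rightarrow> (nat \<Rightarrow> int) \<Rightarrow> nat" where
  "nflip n \<mu> = card {a\<in>faces n. flippable n \<mu> a}"

definition restrict_mv :: "nat \<Rightarrow> (nat \<Rightarrow> int) \<Rightarrow> (nat \<Rightarrow> int)" where
  "restrict_mv n \<mu> = (\<lambda>e. if e \<in> creases (n-1) then \<mu> e else 0)"

definition blue :: "nat \<Rightarrow> (nat \<Rightarrow> int) \<Rightarrow> bool" where
  "blue n \<mu> \<longleftrightarrow> (if n = 1 then True
     else int (nflip n \<mu>) - int (nflip (n-1) (restrict_mv n \<mu>)) = 2)"

definition vcount :: "nat \<Rightarrow> int \<Rightarrow> int" where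
  "vcount n d = int (card {\<mu>. locally_valid n \<mu> \<and> int (nflip n \<mu>) = d})"

definition bcount :: "nat \<Rightarrow> int \<Rightarrow> int" where
  "bcount n d = int (card {\<mu>. locally_valid n \<mu> \<and> int (nflip n \<mu>) = d \<and> blue n \<mu>})"

definition wcount :: "nat \<Rightarrow> int \<Rightarrow> int" where
  "wcount n d = vcount n d - bcount n d"

end

theory Submission
  imports Defs
begin


definition EO :: "int \<Rightarrow> int \<Rightarrow> int \<Rightarrow> int \<Rightarrow> bool" where
  "EO l t r b \<longleftrightarrow> (t \<noteq> l \<and> r = l \<and> b = l) \<or> (t = l \<and> r \<noteq> l \<and> b = l) \<or> (t = l \<and> r = l \<and> b \<noteq> l)"

lemma card3_one:
  assumes "a \<noteq> b" "a \<noteq> c" "b \<noteq> c"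
  shows "card {e\<in>{a,b,c}. P e} = 1 \<longleftrightarrow>
    (P a \<and> \<not> P b \<and> \<not> P c) \<or> (\<not> P a \<and> P b \<and> \<not> P c) \<or> (\<not> P a \<and> \<not> P b \<and> P c)"
proof -
  have e: "{e\<in>{a,b,c}. P e} = (if P a then {a} else {}) \<union> (if P b then {b} else {}) \<union> (if P c then {c} else {})"
    by auto
  show ?thesis unfolding e using assms
    by (cases "P a"; cases "P b"; cases "P c") (auto simp: card_insert_if)
qed

lemma vert_iff:
  fixes k :: nat
  assumes "k \<ge> 1"
  shows "card {e\<in>{3*k-1, 3*k, 3*k+1}. \<mu> e \<noteq> \<mu> (3*k-3)} = 1 \<longleftrightarrow>
         EO (\<mu> (3*k-3)) (\<mu> (3*k-1)) (\<mu> (3*k)) (\<mu> (3*k+1))"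
  using assms by (subst card3_one) (auto simp: EO_def)

lemma lv_iff:
  "locally_valid n \<mu> \<longleftrightarrow> \<mu> \<in> mv_assignments n \<and>
     (\<forall>k\<in>{1..n-1}. EO (\<mu> (3*k-3)) (\<mu> (3*k-1)) (\<mu> (3*k)) (\<mu> (3*k+1)))"
  unfolding locally_valid_def
  apply (rule conj_cong[OF refl])
  apply (rule ball_cong[OF refl])
  apply (rule vert_iff)
  by auto

lemma creases_vert:
  assumes "k \<in> {1..n-1}"
  shows "3*k-3 \<in> creases n" "3*k-1 \<in> creases n" "3*k \<in> creases n" "3*k+1 \<in> creases n"
proof -
  show "3*k-1 \<in> creases n" "3*k \<in> creases n" "3*k+1 \<in> creases n"
    using assms unfolding creases_def by auto
  show "3*k-3 \<in> creases n"
  proof (cases "k = 1")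
    case True then show ?thesis unfolding creases_def by auto
  next
    case False
    then have "k-1 \<in> {1..n-1}" "3*k-3 = 3*(k-1)" using assms by auto
    then show ?thesis unfolding creases_def by blast
  qed
qed

lemma finite_creases: "finite (creases n)"
  unfolding creases_def by auto

lemma finite_mv: "finite (mv_assignments n)"
proof -
  have "mv_assignments n \<subseteq> {f. \<forall>x. (x \<in> creases n \<longrightarrow> f x \<in> {1,-1}) \<and> (x \<notin> creases n \<longrightarrow> f x = 0)}"
    unfolding mv_assignments_def by auto
  moreover have "finite {f. \<forall>x. (x \<in> creases n \<longrightarrow> f x \<in> {1,-1::int}) \<and> (x \<notin> creases n \<longrightarrow> f x = 0)}"
    by (rule finite_set_of_finite_funs) (auto simp: finite_creases)
  ultimately show ?thesis by (rule finite_subset)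
qed

lemma finite_lv: "finite {\<mu>. locally_valid n \<mu> \<and> P \<mu>}"
  by (rule finite_subset[OF _ finite_mv[of n]]) (auto simp: locally_valid_def)

lemma mv_val: "\<mu> \<in> mv_assignments n \<Longrightarrow> e \<in> creases n \<Longrightarrow> \<mu> e = 1 \<or> \<mu> e = -1"
  unfolding mv_assignments_def by auto

lemma border_eq1: "border n (1,j) = {e. (j \<ge> 2 \<and> e = 3*j-4) \<or> e = 3*j-3 \<or> (j \<le> n-1 \<and> e = 3*j-1)}"
  unfolding border_def Let_def by auto

lemma border_eq2: "border n (2,j) = {e. (j \<ge> 2 \<and> e = 3*j-2) \<or> e = 3*j-3 \<or> (j \<le> n-1 \<and> e = 3*j+1)}"
  unfolding border_def Let_def by auto

lemma border1:
  fixes j k :: nat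
  assumes "j \<ge> 1" "k \<ge> 1" "k \<le> n-1"
  shows "(3*k-3 \<in> border n (1,j)) \<longleftrightarrow> k = j"
    "(3*k-1 \<in> border n (1,j)) \<longleftrightarrow> (k+1 = j \<or> k = j)"
    "(3*k \<in> border n (1,j)) \<longleftrightarrow> k+1 = j"
    "(3*k+1 \<notin> border n (1,j))"
  unfolding border_eq1 using assms by (simp; presburger)+

lemma border2:
  fixes j k :: nat
  assumes "j \<ge> 1" "k \<ge> 1" "k \<le> n-1"
  shows "(3*k-3 \<in> border n (2,j)) \<longleftrightarrow> k = j"
    "(3*k-1 \<notin> border n (2,j))"
    "(3*k \<in> border n (2,j)) \<longleftrightarrow> k+1 = j"
    "(3*k+1 \<in> border n (2,j)) \<longleftrightarrow> (k+1 = j \<or> k = j)"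
  unfolding border_eq2 using assms by (simp; presburger)+



definition c1 :: "nat \<Rightarrow> (nat \<Rightarrow> int) \<Rightarrow> nat \<Rightarrow> bool" where
  "c1 n \<mu> j \<longleftrightarrow> (j = 1 \<or> \<mu> (3*j-2) = \<mu> (3*j-6)) \<and> (j = n \<or> \<mu> (3*j-1) = \<mu> (3*j-3))"
definition c2 :: "nat \<Rightarrow> (nat \<Rightarrow> int) \<Rightarrow> nat \<Rightarrow> bool" where
  "c2 n \<mu> j \<longleftrightarrow> (j = 1 \<or> \<mu> (3*j-4) = \<mu> (3*j-6)) \<and> (j = n \<or> \<mu> (3*j+1) = \<mu> (3*j-3))"

lemma flip_mv: "\<mu> \<in> mv_assignments n \<Longrightarrow> face_flip n a \<mu> \<in> mv_assignments n"
  unfolding mv_assignments_def face_flip_def by auto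

lemma pm1: "x \<in> {1,-1::int} \<longleftrightarrow> x = 1 \<or> x = -1" by auto

lemma EOa: "l \<in> {1,-1} \<Longrightarrow> t \<in> {1,-1} \<Longrightarrow> r \<in> {1,-1} \<Longrightarrow> b \<in> {1,-1} \<Longrightarrow> EO l t r b \<Longrightarrow>
   EO l (-t) (-r) b \<longleftrightarrow> b = l"
  unfolding EO_def by auto
lemma EOb: "l \<in> {1,-1} \<Longrightarrow> t \<in> {1,-1} \<Longrightarrow> r \<in> {1,-1} \<Longrightarrow> b \<in> {1,-1} \<Longrightarrow> EO l t r b \<Longrightarrow>
   EO (-l) (-t) r b \<longleftrightarrow> t = l"
  unfolding EO_def by auto
lemma EOc: "l \<in> {1,-1} \<Longrightarrow> t \<in> {1,-1} \<Longrightarrow> r \<in> {1,-1} \<Longrightarrow> b \<in> {1,-1} \<Longrightarrow> EO l t r b \<Longrightarrow>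
   EO l t (-r) (-b) \<longleftrightarrow> t = l"
  unfolding EO_def by auto
lemma EOd: "l \<in> {1,-1} \<Longrightarrow> t \<in> {1,-1} \<Longrightarrow> r \<in> {1,-1} \<Longrightarrow> b \<in> {1,-1} \<Longrightarrow> EO l t r b \<Longrightarrow>
   EO (-l) t r (-b) \<longleftrightarrow> b = l"
  unfolding EO_def by auto

lemma vals:
  assumes "\<mu> \<in> mv_assignments n" "k \<in> {1..n-1}"
  shows "\<mu> (3*k-3) \<in> {1,-1}" "\<mu> (3*k-1) \<in> {1,-1}" "\<mu> (3*k) \<in> {1,-1}" "\<mu> (3*k+1) \<in> {1,-1}"
  using assms creases_vert[OF assms(2)] unfolding mv_assignments_def by auto

lemma FL1:
  assumes lv: "locally_valid n \<mu>" and j: "1 \<le> j" "j \<le> n"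
  shows "flippable n \<mu> (1,j) \<longleftrightarrow> c1 n \<mu> j"
proof -
  let ?m = "face_flip n (1,j) \<mu>"
  have mv: "\<mu> \<in> mv_assignments n" and eo: "\<forall>k\<in>{1..n-1}. EO (\<mu> (3*k-3)) (\<mu> (3*k-1)) (\<mu> (3*k)) (\<mu> (3*k+1))"
    using lv lv_iff by auto
  have key: "EO (?m (3*k-3)) (?m (3*k-1)) (?m (3*k)) (?m (3*k+1)) \<longleftrightarrow>
     (if k+1 = j then \<mu> (3*k+1) = \<mu> (3*k-3) else if k = j then \<mu> (3*k-1) = \<mu> (3*k-3) else True)"
    if k: "k \<in> {1..n-1}" for k
  proof -
    have kk: "k \<ge> 1" "k \<le> n-1" using k by auto
    have e: "EO (\<mu> (3*k-3)) (\<mu> (3*k-1)) (\<mu> (3*k)) (\<mu> (3*k+1))" using eo k by auto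
    note v = vals[OF mv k]
    note b = border1[OF j(1) kk]
    show ?thesis
    proof (cases "k+1 = j")
      case True
      then have "k \<noteq> j" by auto
      then show ?thesis using True b e EOa[OF v e] by (simp add: face_flip_def)
    next
      case False
      show ?thesis
      proof (cases "k = j")
        case True
        then show ?thesis using False b e EOb[OF v e] by (simp add: face_flip_def)
      next
        case False2: False
        then show ?thesis using False b e by (simp add: face_flip_def)
      qed
    qed
  qed
  have "flippable n \<mu> (1,j) \<longleftrightarrow> (\<forall>k\<in>{1..n-1}. EO (?m (3*k-3)) (?m (3*k-1)) (?m (3*k)) (?m (3*k+1)))"
    unfolding flippable_def using lv flip_mv[OF mv] lv_iff[of n ?m] by auto
  also have "\<dots> \<longleftrightarrow> (\<forall>k\<in>{1..n-1}. (if k+1 = j then \<mu> (3*k+1) = \<mu> (3*k-3) else if k = j then \<mu> (3*k-1) = \<mu> (3*k-3) else True))"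
    using key by auto
  also have "\<dots> \<longleftrightarrow> c1 n \<mu> j"
  proof
    assume H: "\<forall>k\<in>{1..n-1}. (if k+1 = j then \<mu> (3*k+1) = \<mu> (3*k-3) else if k = j then \<mu> (3*k-1) = \<mu> (3*k-3) else True)"
    have 1: "j = 1 \<or> \<mu> (3*j-2) = \<mu> (3*j-6)"
    proof (cases "j = 1")
      case False
      then have "j-1 \<in> {1..n-1}" "(j-1)+1 = j" "3*(j-1)+1 = 3*j-2" "3*(j-1)-3 = 3*j-6" using j by auto
      then show ?thesis using H[rule_format, of "j-1"] by simp
    qed simp
    have 2: "j = n \<or> \<mu> (3*j-1) = \<mu> (3*j-3)"
    proof (cases "j = n")
      case False
      then have "j \<in> {1..n-1}" using j by auto
      then show ?thesis using H[rule_format, of j] by simp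
    qed simp
    show "c1 n \<mu> j" using 1 2 unfolding c1_def by simp
  next
    assume C: "c1 n \<mu> j"
    show "\<forall>k\<in>{1..n-1}. (if k+1 = j then \<mu> (3*k+1) = \<mu> (3*k-3) else if k = j then \<mu> (3*k-1) = \<mu> (3*k-3) else True)"
    proof
      fix k assume k: "k \<in> {1..n-1}"
      show "(if k+1 = j then \<mu> (3*k+1) = \<mu> (3*k-3) else if k = j then \<mu> (3*k-1) = \<mu> (3*k-3) else True)"
      proof (cases "k+1 = j")
        case True
        then have "3*k+1 = 3*j-2" "3*k-3 = 3*j-6" "j \<noteq> 1" using k by auto
        then show ?thesis using C True unfolding c1_def by simp
      next
        case False
        then show ?thesis using C k unfolding c1_def by auto
      qed
    qed
  qed
  finally show ?thesis .
qed

lemma FL2: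
  assumes lv: "locally_valid n \<mu>" and j: "1 \<le> j" "j \<le> n"
  shows "flippable n \<mu> (2,j) \<longleftrightarrow> c2 n \<mu> j"
proof -
  let ?m = "face_flip n (2,j) \<mu>"
  have mv: "\<mu> \<in> mv_assignments n" and eo: "\<forall>k\<in>{1..n-1}. EO (\<mu> (3*k-3)) (\<mu> (3*k-1)) (\<mu> (3*k)) (\<mu> (3*k+1))"
    using lv lv_iff by auto
  have key: "EO (?m (3*k-3)) (?m (3*k-1)) (?m (3*k)) (?m (3*k+1)) \<longleftrightarrow>
     (if k+1 = j then \<mu> (3*k-1) = \<mu> (3*k-3) else if k = j then \<mu> (3*k+1) = \<mu> (3*k-3) else True)"
    if k: "k \<in> {1..n-1}" for k
  proof -
    have kk: "k \<ge> 1" "k \<le> n-1" using k by auto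
    have e: "EO (\<mu> (3*k-3)) (\<mu> (3*k-1)) (\<mu> (3*k)) (\<mu> (3*k+1))" using eo k by auto
    note v = vals[OF mv k]
    note b = border2[OF j(1) kk]
    show ?thesis
    proof (cases "k+1 = j")
      case True
      then have "k \<noteq> j" by auto
      then show ?thesis using True b e EOc[OF v e] by (simp add: face_flip_def)
    next
      case False
      show ?thesis
      proof (cases "k = j")
        case True
        then show ?thesis using False b e EOd[OF v e] by (simp add: face_flip_def)
      next
        case False2: False
        then show ?thesis using False b e by (simp add: face_flip_def)
      qed
    qed
  qed
  have "flippable n \<mu> (2,j) \<longleftrightarrow> (\<forall>k\<in>{1..n-1}. EO (?m (3*k-3)) (?m (3*k-1)) (?m (3*k)) (?m (3*k+1)))"
    unfolding flippable_def using lv flip_mv[OF mv] lv_iff[of n ?m] by auto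
  also have "\<dots> \<longleftrightarrow> (\<forall>k\<in>{1..n-1}. (if k+1 = j then \<mu> (3*k-1) = \<mu> (3*k-3) else if k = j then \<mu> (3*k+1) = \<mu> (3*k-3) else True))"
    using key by auto
  also have "\<dots> \<longleftrightarrow> c2 n \<mu> j"
  proof
    assume H: "\<forall>k\<in>{1..n-1}. (if k+1 = j then \<mu> (3*k-1) = \<mu> (3*k-3) else if k = j then \<mu> (3*k+1) = \<mu> (3*k-3) else True)"
    have 1: "j = 1 \<or> \<mu> (3*j-4) = \<mu> (3*j-6)"
    proof (cases "j = 1")
      case False
      then have "j-1 \<in> {1..n-1}" "(j-1)+1 = j" "3*(j-1)-1 = 3*j-4" "3*(j-1)-3 = 3*j-6" using j by auto
      then show ?thesis using H[rule_format, of "j-1"] by simp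
    qed simp
    have 2: "j = n \<or> \<mu> (3*j+1) = \<mu> (3*j-3)"
    proof (cases "j = n")
      case False
      then have "j \<in> {1..n-1}" using j by auto
      then show ?thesis using H[rule_format, of j] by simp
    qed simp
    show "c2 n \<mu> j" using 1 2 unfolding c2_def by simp
  next
    assume C: "c2 n \<mu> j"
    show "\<forall>k\<in>{1..n-1}. (if k+1 = j then \<mu> (3*k-1) = \<mu> (3*k-3) else if k = j then \<mu> (3*k+1) = \<mu> (3*k-3) else True)"
    proof
      fix k assume k: "k \<in> {1..n-1}"
      show "(if k+1 = j then \<mu> (3*k-1) = \<mu> (3*k-3) else if k = j then \<mu> (3*k+1) = \<mu> (3*k-3) else True)"
      proof (cases "k+1 = j")
        case True
        then have "3*k-1 = 3*j-4" "3*k-3 = 3*j-6" "j \<noteq> 1" using k by auto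
        then show ?thesis using C True unfolding c2_def by simp
      next
        case False
        then show ?thesis using C k unfolding c2_def by auto
      qed
    qed
  qed
  finally show ?thesis .
qed

lemma NF:
  assumes lv: "locally_valid n \<mu>"
  shows "nflip n \<mu> = card {j\<in>{1..n}. c1 n \<mu> j} + card {j\<in>{1..n}. c2 n \<mu> j}"
proof -
  have "{a\<in>faces n. flippable n \<mu> a} = Pair 1 ` {j\<in>{1..n}. c1 n \<mu> j} \<union> Pair 2 ` {j\<in>{1..n}. c2 n \<mu> j}"
    unfolding faces_def using FL1[OF lv] FL2[OF lv] by auto
  moreover have "card (Pair (1::nat) ` {j\<in>{1..n}. c1 n \<mu> j} \<union> Pair 2 ` {j\<in>{1..n}. c2 n \<mu> j})
      = card {j\<in>{1..n}. c1 n \<mu> j} + card {j\<in>{1..n}. c2 n \<mu> j}"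
    by (subst card_Un_disjoint) (auto simp: card_image inj_on_def)
  ultimately show ?thesis unfolding nflip_def by simp
qed


definition ext :: "nat \<Rightarrow> (nat \<Rightarrow> int) \<Rightarrow> nat \<Rightarrow> (nat \<Rightarrow> int)" where
  "ext n \<mu> x = (\<lambda>e. if e = 3*n-1 then (if x = 0 then - \<mu> (3*n-3) else \<mu> (3*n-3))
     else if e = 3*n then (if x = 1 then - \<mu> (3*n-3) else \<mu> (3*n-3))
     else if e = 3*n+1 then (if x = 2 then - \<mu> (3*n-3) else \<mu> (3*n-3))
     else \<mu> e)"

definition ch :: "nat \<Rightarrow> (nat \<Rightarrow> int) \<Rightarrow> nat" where
  "ch n \<mu> = (if \<mu> (3*n-1) \<noteq> \<mu> (3*n-3) then 0 else if \<mu> (3*n) \<noteq> \<mu> (3*n-3) then 1 else 2)"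

lemma creases_Suc: "n \<ge> 1 \<Longrightarrow> creases (Suc n) = creases n \<union> {3*n-1, 3*n, 3*n+1}"
proof -
  assume n: "n \<ge> 1"
  have "{1..Suc n - 1} = {1..n-1} \<union> {n}" using n by auto
  then show ?thesis unfolding creases_def by auto
qed

lemma creases_lt: "n \<ge> 1 \<Longrightarrow> e \<in> creases n \<Longrightarrow> e < 3*n-1"
  unfolding creases_def by auto

lemma creases_L: "n \<ge> 1 \<Longrightarrow> 3*n-3 \<in> creases n"
proof -
  assume n: "n \<ge> 1"
  show ?thesis
  proof (cases "n = 1")
    case True then show ?thesis unfolding creases_def by auto
  next
    case False
    then have "n-1 \<in> {1..n-1}" "3*n-3 = 3*(n-1)" using n by auto
    then show ?thesis unfolding creases_def by blast
  qed
qed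

lemma ext_low: "e < 3*n-1 \<Longrightarrow> ext n \<mu> x e = \<mu> e"
  unfolding ext_def by auto

lemma ext_vals:
  assumes "n \<ge> 1"
  shows "ext n \<mu> x (3*n-1) = (if x = 0 then - \<mu> (3*n-3) else \<mu> (3*n-3))"
    "ext n \<mu> x (3*n) = (if x = 1 then - \<mu> (3*n-3) else \<mu> (3*n-3))"
    "ext n \<mu> x (3*n+1) = (if x = 2 then - \<mu> (3*n-3) else \<mu> (3*n-3))"
    "ext n \<mu> x (3*n-3) = \<mu> (3*n-3)"
  using assms unfolding ext_def by auto

lemma E1:
  assumes n: "n \<ge> 1" and lv: "locally_valid n \<mu>" and x: "x < 3"
  shows "locally_valid (Suc n) (ext n \<mu> x)"
proof -
  have mv: "\<mu> \<in> mv_assignments n" and eo: "\<forall>k\<in>{1..n-1}. EO (\<mu> (3*k-3)) (\<mu> (3*k-1)) (\<mu> (3*k)) (\<mu> (3*k+1))"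
    using lv lv_iff by auto
  have L: "\<mu> (3*n-3) = 1 \<or> \<mu> (3*n-3) = -1" using mv_val[OF mv creases_L[OF n]] .
  have "ext n \<mu> x \<in> mv_assignments (Suc n)"
    unfolding mv_assignments_def
  proof (intro CollectI conjI allI ballI impI)
    fix e assume e: "e \<in> creases (Suc n)"
    show "ext n \<mu> x e \<in> {1,-1}"
    proof (cases "e \<in> creases n")
      case True
      then show ?thesis using mv_val[OF mv True] ext_low[of e n \<mu> x] creases_lt[OF n True] by auto
    next
      case False
      then have "e = 3*n-1 \<or> e = 3*n \<or> e = 3*n+1" using e creases_Suc[OF n] by auto
      then show ?thesis using L ext_vals[OF n, of \<mu> x] by (elim disjE) auto
    qed
  next
    fix e assume e: "e \<notin> creases (Suc n)"
    then have "e \<notin> creases n" "e \<noteq> 3*n-1" "e \<noteq> 3*n" "e \<noteq> 3*n+1" using creases_Suc[OF n] by auto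
    then show "ext n \<mu> x e = 0" using mv unfolding ext_def mv_assignments_def by auto
  qed
  moreover have "\<forall>k\<in>{1..Suc n-1}. EO (ext n \<mu> x (3*k-3)) (ext n \<mu> x (3*k-1)) (ext n \<mu> x (3*k)) (ext n \<mu> x (3*k+1))"
  proof
    fix k assume k: "k \<in> {1..Suc n - 1}"
    show "EO (ext n \<mu> x (3*k-3)) (ext n \<mu> x (3*k-1)) (ext n \<mu> x (3*k)) (ext n \<mu> x (3*k+1))"
    proof (cases "k = n")
      case True
      have x3: "x = 0 \<or> x = 1 \<or> x = 2" using x by auto
      show ?thesis unfolding True ext_vals[OF n] using L x3 unfolding EO_def by auto
    next
      case False
      then have "k \<in> {1..n-1}" "3*k+1 < 3*n-1" using k by auto
      then show ?thesis using eo by (simp add: ext_low)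
    qed
  qed
  ultimately show ?thesis using lv_iff by blast
qed

lemma E_ch:
  assumes n: "n \<ge> 1" and mv: "\<mu> \<in> mv_assignments n" and x: "x < 3"
  shows "ch n (ext n \<mu> x) = x"
proof -
  have L: "\<mu> (3*n-3) = 1 \<or> \<mu> (3*n-3) = -1" using mv_val[OF mv creases_L[OF n]] .
  have x3: "x = 0 \<or> x = 1 \<or> x = 2" using x by auto
  show ?thesis unfolding ch_def ext_vals[OF n] using L x3 by auto
qed

lemma E3:
  assumes n: "n \<ge> 1" and mv: "\<mu> \<in> mv_assignments n"
  shows "restrict_mv (Suc n) (ext n \<mu> x) = \<mu>"
proof
  fix e
  show "restrict_mv (Suc n) (ext n \<mu> x) e = \<mu> e"
  proof (cases "e \<in> creases n")
    case True
    then show ?thesis using creases_lt[OF n True] by (simp add: restrict_mv_def ext_low)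
  next
    case False
    then show ?thesis using mv unfolding restrict_mv_def mv_assignments_def by auto
  qed
qed

lemma E2:
  assumes n: "n \<ge> 1" and lv: "locally_valid (Suc n) \<mu>"
  shows "locally_valid n (restrict_mv (Suc n) \<mu>)" "ext n (restrict_mv (Suc n) \<mu>) (ch n \<mu>) = \<mu>"
proof -
  have mv: "\<mu> \<in> mv_assignments (Suc n)" and eo: "\<forall>k\<in>{1..n}. EO (\<mu> (3*k-3)) (\<mu> (3*k-1)) (\<mu> (3*k)) (\<mu> (3*k+1))"
    using lv lv_iff[of "Suc n"] by auto
  let ?r = "restrict_mv (Suc n) \<mu>"
  have sub: "creases n \<subseteq> creases (Suc n)" using creases_Suc[OF n] by auto
  have "?r \<in> mv_assignments n"
    using mv sub unfolding mv_assignments_def restrict_mv_def by auto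
  moreover have "\<forall>k\<in>{1..n-1}. EO (?r (3*k-3)) (?r (3*k-1)) (?r (3*k)) (?r (3*k+1))"
  proof
    fix k assume k: "k \<in> {1..n-1}"
    note c = creases_vert[OF k]
    have "k \<in> {1..n}" using k by auto
    then show "EO (?r (3*k-3)) (?r (3*k-1)) (?r (3*k)) (?r (3*k+1))"
      using eo c unfolding restrict_mv_def by auto
  qed
  ultimately show "locally_valid n ?r" using lv_iff by blast
  have Lr: "?r (3*n-3) = \<mu> (3*n-3)" using creases_L[OF n] by (simp add: restrict_mv_def)
  have vn: "\<mu> (3*n-3) \<in> {1,-1}" "\<mu> (3*n-1) \<in> {1,-1}" "\<mu> (3*n) \<in> {1,-1}" "\<mu> (3*n+1) \<in> {1,-1}"
    using vals[OF mv, of n] n by auto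
  have en: "EO (\<mu> (3*n-3)) (\<mu> (3*n-1)) (\<mu> (3*n)) (\<mu> (3*n+1))" using eo n by auto
  show "ext n ?r (ch n \<mu>) = \<mu>"
  proof
    fix e
    show "ext n ?r (ch n \<mu>) e = \<mu> e"
    proof (cases "e = 3*n-1 \<or> e = 3*n \<or> e = 3*n+1")
      case True
      have ee: "ext n ?r (ch n \<mu>) e = (if e = 3*n-1 then (if ch n \<mu> = 0 then - \<mu> (3*n-3) else \<mu> (3*n-3))
         else if e = 3*n then (if ch n \<mu> = 1 then - \<mu> (3*n-3) else \<mu> (3*n-3))
         else (if ch n \<mu> = 2 then - \<mu> (3*n-3) else \<mu> (3*n-3)))"
        using True ext_vals[OF n, of ?r "ch n \<mu>"] Lr by auto
      have "\<mu> (3*n-1) = (if ch n \<mu> = 0 then - \<mu> (3*n-3) else \<mu> (3*n-3))"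
        "\<mu> (3*n) = (if ch n \<mu> = 1 then - \<mu> (3*n-3) else \<mu> (3*n-3))"
        "\<mu> (3*n+1) = (if ch n \<mu> = 2 then - \<mu> (3*n-3) else \<mu> (3*n-3))"
        using vn en unfolding ch_def EO_def by auto
      then show ?thesis unfolding ee using True n by auto
    next
      case False
      then have "ext n ?r (ch n \<mu>) e = ?r e" unfolding ext_def by auto
      also have "\<dots> = \<mu> e"
      proof (cases "e \<in> creases n")
        case True then show ?thesis by (simp add: restrict_mv_def)
      next
        case F2: False
        then have "e \<notin> creases (Suc n)" using False creases_Suc[OF n] by auto
        then show ?thesis using F2 mv unfolding restrict_mv_def mv_assignments_def by auto
      qed
      finally show ?thesis .
    qed
  qed
qed


lemma finite_lvS: "finite {\<mu>. locally_valid n \<mu> \<and> P \<mu> \<and> Q \<mu>}"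
  using finite_lv[of n "\<lambda>\<mu>. P \<mu> \<and> Q \<mu>"] by simp

lemma CNT:
  assumes n: "n \<ge> 1"
  shows "card {\<mu>. locally_valid (Suc n) \<mu> \<and> P \<mu>} =
    card {\<mu>. locally_valid n \<mu> \<and> P (ext n \<mu> 0)} + card {\<mu>. locally_valid n \<mu> \<and> P (ext n \<mu> 1)}
    + card {\<mu>. locally_valid n \<mu> \<and> P (ext n \<mu> 2)}"
proof -
  define A where "A x = {\<mu>. locally_valid (Suc n) \<mu> \<and> P \<mu> \<and> ch n \<mu> = x}" for x
  have cA: "card (A x) = card {\<mu>. locally_valid n \<mu> \<and> P (ext n \<mu> x)}" if x: "x < 3" for x
  proof (rule bij_betw_same_card)
    show "bij_betw (restrict_mv (Suc n)) (A x) {\<mu>. locally_valid n \<mu> \<and> P (ext n \<mu> x)}"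
    proof (rule bij_betw_byWitness[where f' = "\<lambda>\<mu>. ext n \<mu> x"])
      show "\<forall>a\<in>A x. ext n (restrict_mv (Suc n) a) x = a"
        unfolding A_def using E2[OF n] by auto
      show "\<forall>a'\<in>{\<mu>. locally_valid n \<mu> \<and> P (ext n \<mu> x)}. restrict_mv (Suc n) (ext n a' x) = a'"
        using E3[OF n] by (auto simp: locally_valid_def)
      show "restrict_mv (Suc n) ` A x \<subseteq> {\<mu>. locally_valid n \<mu> \<and> P (ext n \<mu> x)}"
        unfolding A_def using E2[OF n] by auto
      show "(\<lambda>\<mu>. ext n \<mu> x) ` {\<mu>. locally_valid n \<mu> \<and> P (ext n \<mu> x)} \<subseteq> A x"
        unfolding A_def using E1[OF n _ x] E_ch[OF n _ x] by (auto simp: locally_valid_def)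
    qed
  qed
  have U: "{\<mu>. locally_valid (Suc n) \<mu> \<and> P \<mu>} = A 0 \<union> A 1 \<union> A 2"
    unfolding A_def ch_def by auto
  have f: "finite (A x)" for x unfolding A_def by (rule finite_lvS)
  have "card (A 0 \<union> A 1 \<union> A 2) = card (A 0) + card (A 1) + card (A 2)"
    using f by (subst card_Un_disjoint, auto simp: A_def)+
  then show ?thesis using U cA by simp
qed

lemma CS: "card {j\<in>{1..Suc m}. P j} = card {j\<in>{1..m}. P j} + (if P (Suc m) then 1 else 0)"
proof -
  have "{j\<in>{1..Suc m}. P j} = {j\<in>{1..m}. P j} \<union> (if P (Suc m) then {Suc m} else {})"
    by (auto simp: atLeastAtMostSuc_conv)
  then show ?thesis by (simp add: card_Un_disjoint)
qed

lemma DELTA: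
  assumes n: "n \<ge> 1" and lv: "locally_valid n \<mu>" and x: "x < 3"
  shows "int (nflip (Suc n) (ext n \<mu> x)) = int (nflip n \<mu>) + of_bool (x \<noteq> 2) + of_bool (x \<noteq> 0)
     - of_bool (c1 n \<mu> n \<and> x = 0) - of_bool (c2 n \<mu> n \<and> x = 2)"
proof -
  obtain m where m: "n = Suc m" using n by (cases n) auto
  let ?m = "ext n \<mu> x"
  have mv: "\<mu> \<in> mv_assignments n" using lv by (simp add: locally_valid_def)
  have L: "\<mu> (3*n-3) = 1 \<or> \<mu> (3*n-3) = -1" using mv_val[OF mv creases_L[OF n]] .
  have lv': "locally_valid (Suc n) ?m" using E1[OF n lv x] .
  have low1: "card {j\<in>{1..m}. c1 (Suc n) ?m j} = card {j\<in>{1..m}. c1 n \<mu> j}"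
  proof (rule arg_cong[where f = card], rule Collect_cong)
    fix j
    show "(j \<in> {1..m} \<and> c1 (Suc n) ?m j) = (j \<in> {1..m} \<and> c1 n \<mu> j)"
    proof (cases "j \<in> {1..m}")
      case True
      then have "3*j-2 < 3*n-1" "3*j-6 < 3*n-1" "3*j-1 < 3*n-1" "3*j-3 < 3*n-1" "j \<noteq> n" "j \<noteq> Suc n"
        using m by auto
      then show ?thesis using True unfolding c1_def by (simp add: ext_low)
    qed auto
  qed
  have low2: "card {j\<in>{1..m}. c2 (Suc n) ?m j} = card {j\<in>{1..m}. c2 n \<mu> j}"
  proof (rule arg_cong[where f = card], rule Collect_cong)
    fix j
    show "(j \<in> {1..m} \<and> c2 (Suc n) ?m j) = (j \<in> {1..m} \<and> c2 n \<mu> j)"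
    proof (cases "j \<in> {1..m}")
      case True
      then have "3*j+1 < 3*n-1" "3*j-6 < 3*n-1" "3*j-4 < 3*n-1" "3*j-3 < 3*n-1" "j \<noteq> n" "j \<noteq> Suc n"
        using m by auto
      then show ?thesis using True unfolding c2_def by (simp add: ext_low)
    qed auto
  qed
  have lo: "3*n-2 < 3*n-1" "3*n-6 < 3*n-1" "3*n-4 < 3*n-1" using n by auto
  have s: "3*Suc n - 2 = 3*n+1" "3*Suc n - 6 = 3*n-3" "3*Suc n - 4 = 3*n-1" by auto
  have ev: "ext n \<mu> x (3*n-1) = \<mu> (3*n-3) \<longleftrightarrow> x \<noteq> 0"
     "ext n \<mu> x (3*n+1) = \<mu> (3*n-3) \<longleftrightarrow> x \<noteq> 2"
    using L ext_vals[OF n, of \<mu> x] by auto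
  have a1: "c1 (Suc n) ?m n \<longleftrightarrow> c1 n \<mu> n \<and> x \<noteq> 0"
    unfolding c1_def using ext_low[OF lo(1)] ext_low[OF lo(2)] ext_vals(4)[OF n] ev by auto
  have a2: "c1 (Suc n) ?m (Suc n) \<longleftrightarrow> x \<noteq> 2"
    unfolding c1_def s using n ext_vals(4)[OF n] ev by auto
  have b1: "c2 (Suc n) ?m n \<longleftrightarrow> c2 n \<mu> n \<and> x \<noteq> 2"
    unfolding c2_def using ext_low[OF lo(3)] ext_low[OF lo(2)] ext_vals(4)[OF n] ev by auto
  have b2: "c2 (Suc n) ?m (Suc n) \<longleftrightarrow> x \<noteq> 0"
    unfolding c2_def s using n ext_vals(4)[OF n] ev by auto
  have N1: "nflip (Suc n) ?m = card {j\<in>{1..m}. c1 n \<mu> j} + (if c1 n \<mu> n \<and> x \<noteq> 0 then 1 else 0) + (if x \<noteq> 2 then 1 else 0)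
     + card {j\<in>{1..m}. c2 n \<mu> j} + (if c2 n \<mu> n \<and> x \<noteq> 2 then 1 else 0) + (if x \<noteq> 0 then 1 else 0)"
    unfolding NF[OF lv'] using CS[of "Suc m" "c1 (Suc n) ?m"] CS[of m "c1 (Suc n) ?m"]
      CS[of "Suc m" "c2 (Suc n) ?m"] CS[of m "c2 (Suc n) ?m"] low1 low2 a1 a2 b1 b2 m by simp
  have N0: "nflip n \<mu> = card {j\<in>{1..m}. c1 n \<mu> j} + (if c1 n \<mu> n then 1 else 0)
     + card {j\<in>{1..m}. c2 n \<mu> j} + (if c2 n \<mu> n then 1 else 0)"
    unfolding NF[OF lv] using CS[of m "c1 n \<mu>"] CS[of m "c2 n \<mu>"] m by simp
  show ?thesis unfolding N1 N0 by auto
qed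

lemma BL:
  assumes n: "n \<ge> 1" and lv: "locally_valid n \<mu>" and x: "x < 3"
  shows "blue (Suc n) (ext n \<mu> x) \<longleftrightarrow> x = 1"
proof -
  have mv: "\<mu> \<in> mv_assignments n" using lv by (simp add: locally_valid_def)
  show ?thesis unfolding blue_def using n x DELTA[OF n lv x] E3[OF n mv] by auto
qed


lemma BC:
  assumes m: "m \<ge> 1"
  shows "bcount (Suc m) d = vcount m (d-2)"
proof -
  have e0: "{\<mu>. locally_valid m \<mu> \<and> (int (nflip (Suc m) (ext m \<mu> x)) = d \<and> blue (Suc m) (ext m \<mu> x))} = {}"
    if "x = 0 \<or> x = 2" for x using BL[OF m, of _ x] that by auto
  have e1: "{\<mu>. locally_valid m \<mu> \<and> (int (nflip (Suc m) (ext m \<mu> 1)) = d \<and> blue (Suc m) (ext m \<mu> 1))}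
      = {\<mu>. locally_valid m \<mu> \<and> int (nflip m \<mu>) = d - 2}"
    using BL[OF m, of _ 1] DELTA[OF m, of _ 1] by auto
  show ?thesis unfolding bcount_def vcount_def
    using CNT[OF m, of "\<lambda>\<mu>. int (nflip (Suc m) \<mu>) = d \<and> blue (Suc m) \<mu>"] e0[of 0] e0[of 2] e1 by simp
qed

lemma REL:
  assumes p: "p \<ge> 1" and lv: "locally_valid (Suc p) \<mu>"
  shows "c1 (Suc p) \<mu> (Suc p) \<longleftrightarrow> ch p \<mu> \<noteq> 2" "c2 (Suc p) \<mu> (Suc p) \<longleftrightarrow> ch p \<mu> \<noteq> 0"
    "blue (Suc p) \<mu> \<longleftrightarrow> ch p \<mu> = 1"
proof -
  have mv: "\<mu> \<in> mv_assignments (Suc p)" and eo: "\<forall>k\<in>{1..p}. EO (\<mu> (3*k-3)) (\<mu> (3*k-1)) (\<mu> (3*k)) (\<mu> (3*k+1))"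
    using lv lv_iff[of "Suc p"] by auto
  have vn: "\<mu> (3*p-3) \<in> {1,-1}" "\<mu> (3*p-1) \<in> {1,-1}" "\<mu> (3*p) \<in> {1,-1}" "\<mu> (3*p+1) \<in> {1,-1}"
    using vals[OF mv, of p] p by auto
  have en: "EO (\<mu> (3*p-3)) (\<mu> (3*p-1)) (\<mu> (3*p)) (\<mu> (3*p+1))" using eo p by auto
  have s: "3*Suc p - 2 = 3*p+1" "3*Suc p - 6 = 3*p-3" "3*Suc p - 4 = 3*p-1" using p by auto
  show "c1 (Suc p) \<mu> (Suc p) \<longleftrightarrow> ch p \<mu> \<noteq> 2"
    unfolding c1_def s ch_def using p vn en unfolding EO_def by auto
  show "c2 (Suc p) \<mu> (Suc p) \<longleftrightarrow> ch p \<mu> \<noteq> 0"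
    unfolding c2_def s ch_def using p vn en unfolding EO_def by auto
  have r: "locally_valid p (restrict_mv (Suc p) \<mu>)" "ext p (restrict_mv (Suc p) \<mu>) (ch p \<mu>) = \<mu>"
    using E2[OF p lv] by auto
  have "ch p \<mu> < 3" unfolding ch_def by auto
  then show "blue (Suc p) \<mu> \<longleftrightarrow> ch p \<mu> = 1"
    using BL[OF p r(1), of "ch p \<mu>"] r(2) by simp
qed

lemma PART3:
  "card {\<mu>. locally_valid m \<mu> \<and> Q \<mu>} = card {\<mu>. locally_valid m \<mu> \<and> Q \<mu> \<and> ch p \<mu> = 0}
     + card {\<mu>. locally_valid m \<mu> \<and> Q \<mu> \<and> ch p \<mu> = 1} + card {\<mu>. locally_valid m \<mu> \<and> Q \<mu> \<and> ch p \<mu> = 2}"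
proof -
  define A where "A x = {\<mu>. locally_valid m \<mu> \<and> Q \<mu> \<and> ch p \<mu> = x}" for x
  have U: "{\<mu>. locally_valid m \<mu> \<and> Q \<mu>} = A 0 \<union> A 1 \<union> A 2"
    unfolding A_def ch_def by auto
  have f: "finite (A x)" for x unfolding A_def by (rule finite_lvS)
  have "card (A 0 \<union> A 1 \<union> A 2) = card (A 0) + card (A 1) + card (A 2)"
    using f by (subst card_Un_disjoint, auto simp: A_def)+
  then show ?thesis using U unfolding A_def by simp
qed

theorem proposition4p10:
  fixes n :: nat and d :: int
  assumes "n \<ge> 3"
  shows "bcount n d = vcount (n-1) (d-2)
       \<and> wcount n d = vcount (n-1) d + wcount (n-1) (d-1) + vcount (n-2) (d-2)
       \<and> vcount n d = vcount (n-1) d + wcount (n-1) (d-1) + vcount (n-1) (d-2) + vcount (n-2) (d-2)"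
proof -
  define p where "p = n - 2"
  have np: "n = Suc (Suc p)" and p: "p \<ge> 1" using assms unfolding p_def by auto
  define m where "m = Suc p"
  have m: "m \<ge> 1" "n = Suc m" "n - 1 = m" "n - 2 = p" unfolding m_def using np by auto
  define K where "K x t = int (card {\<mu>. locally_valid m \<mu> \<and> int (nflip m \<mu>) = t \<and> ch p \<mu> = x})" for x t
  have V: "vcount m t = K 0 t + K 1 t + K 2 t" for t
    unfolding vcount_def K_def using PART3[of m "\<lambda>\<mu>. int (nflip m \<mu>) = t" p] by simp
  have Bm: "bcount m t = K 1 t" for t
  proof -
    have "{\<mu>. locally_valid m \<mu> \<and> int (nflip m \<mu>) = t \<and> blue m \<mu>} = {\<mu>. locally_valid m \<mu> \<and> int (nflip m \<mu>) = t \<and> ch p \<mu> = 1}"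
      using REL(3)[OF p] unfolding m_def by auto
    then show ?thesis unfolding bcount_def K_def by simp
  qed
  have W: "wcount m t = K 0 t + K 2 t" for t unfolding wcount_def V Bm by simp
  have B: "bcount n d = vcount m (d-2)" using BC[OF m(1)] m(2) by simp
  have Bp: "bcount m d = vcount p (d-2)" using BC[OF p] unfolding m_def by simp
  have D: "int (nflip (Suc m) (ext m \<mu> x)) = int (nflip m \<mu>) + of_bool (x \<noteq> 2) + of_bool (x \<noteq> 0)
     - of_bool (ch p \<mu> \<noteq> 2 \<and> x = 0) - of_bool (ch p \<mu> \<noteq> 0 \<and> x = 2)"
    if "locally_valid m \<mu>" "x < 3" for \<mu> x
    using DELTA[OF m(1) that] REL(1,2)[OF p, of \<mu>] that(1) unfolding m_def by simp
  have D0: "int (nflip (Suc m) (ext m \<mu> 0)) = int (nflip m \<mu>) + (if ch p \<mu> = 2 then 1 else 0)"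
    if "locally_valid m \<mu>" for \<mu>
    using D[OF that, of 0] by (cases "ch p \<mu> = 2") simp_all
  have D2: "int (nflip (Suc m) (ext m \<mu> 2)) = int (nflip m \<mu>) + (if ch p \<mu> = 0 then 1 else 0)"
    if "locally_valid m \<mu>" for \<mu>
    using D[OF that, of 2] by (cases "ch p \<mu> = 0") simp_all
  have D1: "int (nflip (Suc m) (ext m \<mu> 1)) = int (nflip m \<mu>) + 2"
    if "locally_valid m \<mu>" for \<mu>
    using D[OF that, of 1] by simp
  have S0: "int (card {\<mu>. locally_valid m \<mu> \<and> int (nflip (Suc m) (ext m \<mu> 0)) = d}) = K 0 d + K 1 d + K 2 (d-1)"
  proof -
    have "card {\<mu>. locally_valid m \<mu> \<and> int (nflip (Suc m) (ext m \<mu> 0)) = d} =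
      card {\<mu>. locally_valid m \<mu> \<and> int (nflip (Suc m) (ext m \<mu> 0)) = d \<and> ch p \<mu> = 0}
     + card {\<mu>. locally_valid m \<mu> \<and> int (nflip (Suc m) (ext m \<mu> 0)) = d \<and> ch p \<mu> = 1}
     + card {\<mu>. locally_valid m \<mu> \<and> int (nflip (Suc m) (ext m \<mu> 0)) = d \<and> ch p \<mu> = 2}"
      by (rule PART3)
    also have "\<dots> = card {\<mu>. locally_valid m \<mu> \<and> int (nflip m \<mu>) = d \<and> ch p \<mu> = 0}
     + card {\<mu>. locally_valid m \<mu> \<and> int (nflip m \<mu>) = d \<and> ch p \<mu> = 1}
     + card {\<mu>. locally_valid m \<mu> \<and> int (nflip m \<mu>) = d - 1 \<and> ch p \<mu> = 2}"
      by (intro arg_cong2[where f = "(+)"] arg_cong[where f = card] Collect_cong; auto simp: D0)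
    finally show ?thesis unfolding K_def by simp
  qed
  have S2: "int (card {\<mu>. locally_valid m \<mu> \<and> int (nflip (Suc m) (ext m \<mu> 2)) = d}) = K 0 (d-1) + K 1 d + K 2 d"
  proof -
    have "card {\<mu>. locally_valid m \<mu> \<and> int (nflip (Suc m) (ext m \<mu> 2)) = d} =
      card {\<mu>. locally_valid m \<mu> \<and> int (nflip (Suc m) (ext m \<mu> 2)) = d \<and> ch p \<mu> = 0}
     + card {\<mu>. locally_valid m \<mu> \<and> int (nflip (Suc m) (ext m \<mu> 2)) = d \<and> ch p \<mu> = 1}
     + card {\<mu>. locally_valid m \<mu> \<and> int (nflip (Suc m) (ext m \<mu> 2)) = d \<and> ch p \<mu> = 2}"
      by (rule PART3)
    also have "\<dots> = card {\<mu>. locally_valid m \<mu> \<and> int (nflip m \<mu>) = d - 1 \<and> ch p \<mu> = 0}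
     + card {\<mu>. locally_valid m \<mu> \<and> int (nflip m \<mu>) = d \<and> ch p \<mu> = 1}
     + card {\<mu>. locally_valid m \<mu> \<and> int (nflip m \<mu>) = d \<and> ch p \<mu> = 2}"
      by (intro arg_cong2[where f = "(+)"] arg_cong[where f = card] Collect_cong; auto simp: D2)
    finally show ?thesis unfolding K_def by simp
  qed
  have S1: "card {\<mu>. locally_valid m \<mu> \<and> int (nflip (Suc m) (ext m \<mu> 1)) = d} = card {\<mu>. locally_valid m \<mu> \<and> int (nflip m \<mu>) = d - 2}"
    by (intro arg_cong[where f = card] Collect_cong) (auto simp: D1[unfolded One_nat_def])
  have Vn: "vcount n d = K 0 d + K 1 d + K 2 (d-1) + vcount m (d-2) + (K 0 (d-1) + K 1 d + K 2 d)"
    unfolding vcount_def m(2) CNT[OF m(1), of "\<lambda>\<mu>. int (nflip (Suc m) \<mu>) = d"]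
    using S0 S1 S2 unfolding vcount_def by simp
  have Vn': "vcount n d = vcount m d + wcount m (d-1) + vcount m (d-2) + vcount p (d-2)"
    unfolding Vn V W Bp[symmetric] Bm by simp
  show ?thesis unfolding m(3,4) using B Vn' unfolding wcount_def by simp
qed

end
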